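(* Let $R\ge 1$, let $\mathbf{x}=(x_1,\dots,x_R)$ be a vector of pairwise distinct reals and $\mathbf{c}\in\mathbb{R}^R$. If $R$ is odd, then $\det B(\mathbf{x},\mathbf{c})=0$. If $R=2T$ is even, then $$\det B(\mathbf{x},\mathbf{c})=\prod_{k=1}^R c_k^2\sum_{(m_i,n_i)_{i=1}^T\in E}\ \prod_{i=1}^T a_{m_i,n_i}^2=\sum_{(m_i,n_i)_{i=1}^T\in E}\ \prod_{i=1}^T b_{m_i,n_i}^2,$$ where $E$ is the set of families $(m_i,n_i)_{i=1}^T$ of integer pairs such that $\bigcup_{i=1}^T\{m_i,n_i\}=\{1,\dots,R\}$, $m_i<n_i$ for all $i$, and $m_1<m_2<\dots<m_T$ (i.e. $E$ indexes the perfect matchings of $\{1,\dots,R\}$).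
   Context: For pairwise distinct reals $x_1,\dots,x_R$, $a_{m,n}=a_{m,n}(\mathbf{x})=0$ if $m=n$ and $a_{m,n}=\frac{1}{x_m-x_n}$ if $m\ne n$. For $\mathbf{c}=(c_1,\dots,c_R)\in\mathbb{R}^R$, $B(\mathbf{x},\mathbf{c})$ is the $R\times R$ matrix with entries $b_{m,n}=c_mc_na_{m,n}$ (so $b_{m,m}=0$ and $b_{m,n}=\frac{c_mc_n}{x_m-x_n}$ for $m\ne n$). *)

theory Defs
  imports "Jordan_Normal_Form.Determinant"
begin

text \<open>Indices are 1-based as in the paper: x, c are given as functions on nat,
  only their values on 1..R matter.\<close>

definition a_entry :: "(nat \<Rightarrow> real) \<Rightarrow> nat \<Rightarrow> nat \<Rightarrow> real" where
  "a_entry x m n = (if m = n then 0 else 1 / (x m - x n))"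

definition b_entry :: "(nat \<Rightarrow> real) \<Rightarrow> (nat \<Rightarrow> real) \<Rightarrow> nat \<Rightarrow> nat \<Rightarrow> real" where
  "b_entry x c m n = c m * c n * a_entry x m n"

text \<open>The R x R matrix B(x,c); JNF matrices are 0-indexed, so entry (i,j) is b_{i+1,j+1}.\<close>
definition B_mat :: "nat \<Rightarrow> (nat \<Rightarrow> real) \<Rightarrow> (nat \<Rightarrow> real) \<Rightarrow> real mat" where
  "B_mat R x c = mat R R (\<lambda>(i, j). b_entry x c (Suc i) (Suc j))"

text \<open>The set E of families (m_i,n_i), i=1..T, stored as a list of length T
  (list position i-1 holds the i-th pair).\<close>
definition matchings_E :: "nat \<Rightarrow> nat \<Rightarrow> (nat \<times> nat) list set" where
  "matchings_E R T = {ps. length ps = T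
     \<and> (\<Union>i<T. {fst (ps ! i), snd (ps ! i)}) = {1..R}
     \<and> (\<forall>i<T. fst (ps ! i) < snd (ps ! i))
     \<and> sorted_wrt (<) (map fst ps)}"

end

theory Submission
  imports Defs
begin


lemma permutes_fix_iff:
  assumes "k \<in> A"
  shows "(q permutes A \<and> q k = k) \<longleftrightarrow> q permutes (A - {k})"
proof
  assume h: "q permutes A \<and> q k = k"
  show "q permutes (A - {k})" unfolding permutes_def
  proof (intro conjI allI impI)
    fix x assume "x \<notin> A - {k}" then show "q x = x" using h by (auto simp: permutes_def)
  next
    fix y show "\<exists>!x. q x = y" using h unfolding permutes_def by blast
  qed
next
  assume h: "q permutes (A - {k})"
  then show "q permutes A \<and> q k = k" using permutes_subset[OF h] unfolding permutes_def by blast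
qed
definition Fp :: "(nat \<Rightarrow> nat \<Rightarrow> real) \<Rightarrow> nat set \<Rightarrow> real" where
  "Fp g S = (\<Sum>p\<in>{p. p permutes S}. of_int (sign p) * (\<Prod>i\<in>S. g i (p i)))"

lemma weight_lemma:
  fixes g :: "nat \<Rightarrow> nat \<Rightarrow> real"
  assumes fin: "finite S" and s: "s \<in> S" and q: "q permutes (S - {s})" and k: "k \<in> S - {s}"
  shows "of_int (sign (transpose s (q k) \<circ> q)) * (\<Prod>i\<in>S. g i ((transpose s (q k) \<circ> q) i))
     = - of_int (sign q) * (g s (q k) * g k s * (\<Prod>i\<in>S-{s}-{k}. g i (q i)))"
proof -
  let ?p = "transpose s (q k) \<circ> q"
  have qs: "q s = s" using permutes_not_in[OF q] by simp
  have qk: "q k \<in> S - {s}" using permutes_in_image[OF q, of k] k by simp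
  have qperm: "permutation q" using q fin by (auto simp: permutation_permutes)
  have sg: "sign ?p = - sign q"
    using qk by (auto simp add: sign_compose[OF permutation_swap_id qperm] sign_swap_id)
  have ps: "?p s = q k" using qs by (simp add: transpose_def)
  have pk: "?p k = s" by simp
  have pi: "transpose s (q k) (q i) = q i" if "i \<in> S - {s} - {k}" for i
  proof -
    have "q i \<noteq> q k" using inj_eq[OF permutes_inj[OF q]] that by auto
    moreover have "q i \<noteq> s" using permutes_in_image[OF q, of i] that by auto
    ultimately show ?thesis by (simp add: transpose_def)
  qed
  have "(\<Prod>i\<in>S. g i (?p i)) = g s (?p s) * (\<Prod>i\<in>S-{s}. g i (?p i))"
    using prod.remove[OF fin s] .
  also have "(\<Prod>i\<in>S-{s}. g i (?p i)) = g k (?p k) * (\<Prod>i\<in>S-{s}-{k}. g i (?p i))"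
    using prod.remove[of "S-{s}" k "\<lambda>i. g i (?p i)"] fin k by simp
  also have "(\<Prod>i\<in>S-{s}-{k}. g i (?p i)) = (\<Prod>i\<in>S-{s}-{k}. g i (q i))"
    by (rule prod.cong) (use pi in auto)
  finally show ?thesis using sg ps pk by (simp add: mult.assoc)
qed


lemma telescope0:
  assumes q: "q permutes A" and fin: "finite A"
  shows "(\<Sum>k\<in>A. (f (q k) - f k :: real)) = 0"
proof -
  have "(\<Sum>k\<in>A. f (q k)) = (\<Sum>k\<in>A. f k)"
    using sum.permute[OF q, of f] by (simp add: comp_def)
  then show ?thesis by (simp add: sum_subtractf)
qed

lemma inner_sum:
  fixes g :: "nat \<Rightarrow> nat \<Rightarrow> real"
  assumes fin: "finite S" and s: "s \<in> S" and q: "q permutes (S - {s})"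
    and tri: "\<And>k m. k \<in> S \<Longrightarrow> m \<in> S \<Longrightarrow> k \<noteq> s \<Longrightarrow> m \<noteq> s \<Longrightarrow> k \<noteq> m \<Longrightarrow>
               g k s * g s m = g k m * (g s m - g s k)"
  shows "(\<Sum>k\<in>S-{s}. g s (q k) * g k s * (\<Prod>i\<in>S-{s}-{k}. g i (q i)))
       = (\<Sum>k\<in>S-{s}. if q k = k then g s k * g k s * (\<Prod>i\<in>S-{s}-{k}. g i (q i)) else 0)"
proof -
  have pt: "g s (q k) * g k s * (\<Prod>i\<in>S-{s}-{k}. g i (q i))
       = (if q k = k then g s k * g k s * (\<Prod>i\<in>S-{s}-{k}. g i (q i)) else 0)
         + (g s (q k) - g s k) * (\<Prod>i\<in>S-{s}. g i (q i))" if k: "k \<in> S - {s}" for k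
  proof (cases "q k = k")
    case True then show ?thesis by auto
  next
    case False
    have qk: "q k \<in> S - {s}" using permutes_in_image[OF q, of k] k by simp
    have pr: "(\<Prod>i\<in>S-{s}. g i (q i)) = g k (q k) * (\<Prod>i\<in>S-{s}-{k}. g i (q i))"
      using prod.remove[of "S-{s}" k "\<lambda>i. g i (q i)"] fin k by simp
    have t: "g k s * g s (q k) = g k (q k) * (g s (q k) - g s k)"
      using tri[of k "q k"] k qk False by auto
    let ?P' = "\<Prod>i\<in>S-{s}-{k}. g i (q i)"
    have "g s (q k) * g k s * ?P' = (g k s * g s (q k)) * ?P'" by (simp add: mult_ac)
    also have "\<dots> = (g k (q k) * (g s (q k) - g s k)) * ?P'" by (simp add: t)
    also have "\<dots> = (g s (q k) - g s k) * (g k (q k) * ?P')" by (simp add: mult_ac)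
    finally show ?thesis using False pr by simp
  qed
  have "(\<Sum>k\<in>S-{s}. g s (q k) * g k s * (\<Prod>i\<in>S-{s}-{k}. g i (q i)))
     = (\<Sum>k\<in>S-{s}. if q k = k then g s k * g k s * (\<Prod>i\<in>S-{s}-{k}. g i (q i)) else 0)
       + (\<Sum>k\<in>S-{s}. (g s (q k) - g s k)) * (\<Prod>i\<in>S-{s}. g i (q i))"
    by (simp add: pt sum.distrib sum_distrib_right)
  also have "(\<Sum>k\<in>S-{s}. (g s (q k) - g s k)) = 0"
    using telescope0[OF q] fin by simp
  finally show ?thesis by simp
qed

lemma Fp_rec:
  assumes fin: "finite S" and s: "s \<in> S"
    and diag: "\<And>i. i \<in> S \<Longrightarrow> g i i = 0"
    and tri: "\<And>k m. k \<in> S \<Longrightarrow> m \<in> S \<Longrightarrow> k \<noteq> s \<Longrightarrow> m \<noteq> s \<Longrightarrow> k \<noteq> m \<Longrightarrow>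
               g k s * g s m = g k m * (g s m - g s k)"
  shows "Fp g S = (\<Sum>k\<in>S-{s}. - (g s k * g k s) * Fp g (S - {s} - {k}))"
proof -
  let ?P = "{p. p permutes S}"
  let ?Q = "{q. q permutes (S - {s})}"
  let ?w = "\<lambda>p. of_int (sign p) * (\<Prod>i\<in>S. g i (p i)) :: real"
  let ?A = "\<lambda>q k. g s k * g k s * (\<Prod>i\<in>S-{s}-{k}. g i (q i))"
  have finP: "finite ?P" using finite_permutations[OF fin] .
  have finQ: "finite ?Q" using finite_permutations fin by blast
  have split: "?P = {p\<in>?P. p s = s} \<union> {p\<in>?P. p s \<noteq> s}" by blast
  have "Fp g S = sum ?w {p\<in>?P. p s = s} + sum ?w {p\<in>?P. p s \<noteq> s}"
    unfolding Fp_def by (subst split, rule sum.union_disjoint) (use finP in auto)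
  also have "sum ?w {p\<in>?P. p s = s} = 0"
  proof (rule sum.neutral, clarify)
    fix p assume "p permutes S" "p s = s"
    then have "(\<Prod>i\<in>S. g i (p i)) = 0" using fin s diag by (intro prod_zero bexI[of _ s]) auto
    then show "?w p = 0" by simp
  qed
  also have "sum ?w {p\<in>?P. p s \<noteq> s} = (\<Sum>(q,k)\<in>?Q \<times> (S-{s}). ?w (transpose s (q k) \<circ> q))"
  proof (rule sum.reindex_bij_witness[where i = "\<lambda>(q,k). transpose s (q k) \<circ> q"
        and j = "\<lambda>p. (transpose s (p s) \<circ> p, inv_into UNIV p s)"])
    fix p assume p: "p \<in> {p\<in>?P. p s \<noteq> s}"
    then have pp: "p permutes S" and ps: "p s \<noteq> s" by auto
    have pinv: "p (inv_into UNIV p s) = s" using permutes_inverses(1)[OF pp] .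
    show "(case (transpose s (p s) \<circ> p, inv_into UNIV p s) of (q, k) \<Rightarrow> transpose s (q k) \<circ> q) = p"
      using pinv by (simp add: o_assoc)
    have psS: "p s \<in> S" using permutes_in_image[OF pp] s by simp
    have c: "transpose s (p s) \<circ> p permutes S"
      by (rule permutes_compose[OF pp permutes_swap_id[OF s psS]])
    have "transpose s (p s) \<circ> p permutes (S - {s})"
      using permutes_fix_iff[OF s, of "transpose s (p s) \<circ> p"] c by simp
    moreover have "inv_into UNIV p s \<in> S" using permutes_in_image[OF permutes_inv[OF pp]] s by simp
    moreover have "inv_into UNIV p s \<noteq> s" using pinv ps by metis
    ultimately show "(transpose s (p s) \<circ> p, inv_into UNIV p s) \<in> ?Q \<times> (S - {s})" by simp
    show "(case (transpose s (p s) \<circ> p, inv_into UNIV p s) of (q, k) \<Rightarrow> ?w (transpose s (q k) \<circ> q)) = ?w p"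
      using pinv by (simp add: o_assoc)
  next
    fix b assume b: "b \<in> ?Q \<times> (S - {s})"
    obtain q k where bq: "b = (q,k)" by (cases b)
    have q: "q permutes (S - {s})" and k: "k \<in> S" "k \<noteq> s" using b bq by auto
    have qs: "q s = s" using permutes_not_in[OF q] by simp
    have qk: "q k \<in> S - {s}" using permutes_in_image[OF q, of k] k by simp
    have qS: "q permutes S" using permutes_subset[OF q] by blast
    have pp: "transpose s (q k) \<circ> q permutes S"
      using permutes_compose[OF qS permutes_swap_id[OF s, of "q k"]] qk by simp
    have pk: "(transpose s (q k) \<circ> q) k = s" by simp
    have "inv_into UNIV (transpose s (q k) \<circ> q) s = k" using permutes_inv_eq[OF pp] pk by blast
    moreover have "(transpose s (q k) \<circ> q) s = q k" using qs by simp
    ultimately show "(\<lambda>p. (transpose s (p s) \<circ> p, inv_into UNIV p s)) ((\<lambda>(q,k). transpose s (q k) \<circ> q) b) = b"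
      using bq by (simp add: o_assoc)
    show "(\<lambda>(q,k). transpose s (q k) \<circ> q) b \<in> {p\<in>?P. p s \<noteq> s}"
      using bq pp qs qk by auto
  qed
  also have "\<dots> = (\<Sum>q\<in>?Q. \<Sum>k\<in>S-{s}. - of_int (sign q) * (g s (q k) * g k s * (\<Prod>i\<in>S-{s}-{k}. g i (q i))))"
    unfolding sum.cartesian_product[symmetric]
    by (intro sum.cong refl) (use weight_lemma[OF fin s] in auto)
  also have "\<dots> = (\<Sum>q\<in>?Q. \<Sum>k\<in>S-{s}. if q k = k then - of_int (sign q) * ?A q k else 0)"
  proof (rule sum.cong[OF refl])
    fix q assume "q \<in> ?Q"
    then have q: "q permutes (S - {s})" by simp
    have "(\<Sum>k\<in>S-{s}. - of_int (sign q) * (g s (q k) * g k s * (\<Prod>i\<in>S-{s}-{k}. g i (q i))))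
        = - of_int (sign q) * (\<Sum>k\<in>S-{s}. g s (q k) * g k s * (\<Prod>i\<in>S-{s}-{k}. g i (q i)))"
      by (simp add: sum_distrib_left)
    also have "\<dots> = - of_int (sign q) * (\<Sum>k\<in>S-{s}. if q k = k then ?A q k else 0)"
      using inner_sum[of S s q g, OF fin s q tri] by simp
    also have "\<dots> = (\<Sum>k\<in>S-{s}. if q k = k then - of_int (sign q) * ?A q k else 0)"
      by (subst sum_distrib_left) (intro sum.cong refl, simp)
    finally show "(\<Sum>k\<in>S-{s}. - of_int (sign q) * (g s (q k) * g k s * (\<Prod>i\<in>S-{s}-{k}. g i (q i))))
        = (\<Sum>k\<in>S-{s}. if q k = k then - of_int (sign q) * ?A q k else 0)" .
  qed
  also have "\<dots> = (\<Sum>k\<in>S-{s}. \<Sum>q\<in>?Q. if q k = k then - of_int (sign q) * ?A q k else 0)"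
    by (rule sum.swap)
  also have "\<dots> = (\<Sum>k\<in>S-{s}. - (g s k * g k s) * Fp g (S - {s} - {k}))"
  proof (rule sum.cong[OF refl])
    fix k assume k: "k \<in> S - {s}"
    have eq: "{q\<in>?Q. q k = k} = {q. q permutes (S - {s} - {k})}"
      using permutes_fix_iff[OF k] by blast
    have "(\<Sum>q\<in>?Q. if q k = k then - of_int (sign q) * ?A q k else 0)
        = (\<Sum>q\<in>{q\<in>?Q. q k = k}. - of_int (sign q) * ?A q k)"
      by (rule sum.inter_filter[OF finQ, symmetric])
    also have "\<dots> = (\<Sum>q\<in>{q. q permutes (S - {s} - {k})}. - (g s k * g k s) * (of_int (sign q) * (\<Prod>i\<in>S-{s}-{k}. g i (q i))))"
      unfolding eq by (intro sum.cong refl) (simp add: algebra_simps)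
    also have "\<dots> = - (g s k * g k s) * Fp g (S - {s} - {k})"
      unfolding Fp_def by (simp add: sum_distrib_left)
    finally show "(\<Sum>q\<in>?Q. if q k = k then - of_int (sign q) * ?A q k else 0)
        = - (g s k * g k s) * Fp g (S - {s} - {k})" .
  qed
  finally show ?thesis by simp
qed


fun Mf :: "(nat \<Rightarrow> nat \<Rightarrow> real) \<Rightarrow> nat \<Rightarrow> nat set \<Rightarrow> real" where
  "Mf w 0 S = 1"
| "Mf w (Suc 0) S = 0"
| "Mf w (Suc (Suc n)) S = (\<Sum>j\<in>S - {Min S}. w (Min S) j * Mf w n (S - {Min S} - {j}))"




lemma Mf_odd: "odd n \<Longrightarrow> Mf w n S = 0"
  by (induction w n S rule: Mf.induct) auto

lemma Fp_empty: "Fp g {} = 1"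
  unfolding Fp_def by (simp add: permutes_empty)

lemma Fp_Mf:
  assumes "finite S" "card S = n"
    and diag: "\<And>i. i \<in> S \<Longrightarrow> g i i = 0"
    and skew: "\<And>i j. i \<in> S \<Longrightarrow> j \<in> S \<Longrightarrow> g i j = - g j i"
    and tri: "\<And>k s m. k \<in> S \<Longrightarrow> m \<in> S \<Longrightarrow> s \<in> S \<Longrightarrow> k \<noteq> s \<Longrightarrow> m \<noteq> s \<Longrightarrow> k \<noteq> m \<Longrightarrow>
               g k s * g s m = g k m * (g s m - g s k)"
  shows "Fp g S = Mf (\<lambda>i j. (g i j)^2) n S"
  using assms
proof (induction n arbitrary: S rule: less_induct)
  case (less n)
  show ?case
  proof (cases n)
    case 0
    then have "S = {}" using less.prems(1,2) by auto
    then show ?thesis using 0 by (simp add: Fp_empty)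
  next
    case (Suc n')
    then have ne: "S \<noteq> {}" using less.prems(1,2) by auto
    define s where "s = Min S"
    have s: "s \<in> S" unfolding s_def using ne less.prems(1) by simp
    have rec: "Fp g S = (\<Sum>k\<in>S-{s}. - (g s k * g k s) * Fp g (S - {s} - {k}))"
      by (rule Fp_rec[OF less.prems(1) s], rule less.prems(3), assumption, rule less.prems(5), auto simp: s)
    show ?thesis
    proof (cases n')
      case 0
      have "card (S - {s}) = 0" using less.prems(2) s Suc 0 by (simp add: card_Diff_singleton)
      then have "S - {s} = {}" using less.prems(1) by simp
      then have "Fp g S = 0" unfolding rec by (simp only: sum.empty)
      then show ?thesis using Suc 0 by simp
    next
      case (Suc m)
      have "Fp g S = (\<Sum>k\<in>S-{s}. (g s k)^2 * Mf (\<lambda>i j. (g i j)^2) m (S - {s} - {k}))"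
        unfolding rec
      proof (rule sum.cong[OF refl])
        fix k assume k: "k \<in> S - {s}"
        have c: "card (S - {s} - {k}) = m"
          using less.prems(1,2) s k Suc \<open>n = Suc n'\<close> by (simp add: card_Diff_singleton)
        have "Fp g (S - {s} - {k}) = Mf (\<lambda>i j. (g i j)^2) m (S - {s} - {k})"
        proof (rule less.IH[of m])
          show "m < n" using Suc \<open>n = Suc n'\<close> by simp
          show "finite (S - {s} - {k})" using less.prems(1) by simp
          show "card (S - {s} - {k}) = m" by (rule c)
          show "\<And>i. i \<in> S - {s} - {k} \<Longrightarrow> g i i = 0" using less.prems(3) by blast
          show "\<And>i j. i \<in> S - {s} - {k} \<Longrightarrow> j \<in> S - {s} - {k} \<Longrightarrow> g i j = - g j i"
            using less.prems(4) by blast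
          show "\<And>k' s' m'. k' \<in> S - {s} - {k} \<Longrightarrow> m' \<in> S - {s} - {k} \<Longrightarrow> s' \<in> S - {s} - {k} \<Longrightarrow>
             k' \<noteq> s' \<Longrightarrow> m' \<noteq> s' \<Longrightarrow> k' \<noteq> m' \<Longrightarrow> g k' s' * g s' m' = g k' m' * (g s' m' - g s' k')"
            using less.prems(5) by blast
        qed
        moreover have "- (g s k * g k s) = (g s k)^2" using less.prems(4)[of k s] k s by (simp add: power2_eq_square)
        ultimately show "- (g s k * g k s) * Fp g (S - {s} - {k}) = (g s k)^2 * Mf (\<lambda>i j. (g i j)^2) m (S - {s} - {k})"
          by simp
      qed
      then show ?thesis using Suc \<open>n = Suc n'\<close> s_def by simp
    qed
  qed
qed

lemma Mf_shift:
  assumes "finite S"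
  shows "Mf w n (Suc ` S) = Mf (\<lambda>i j. w (Suc i) (Suc j)) n S"
  using assms
proof (induction n arbitrary: S rule: less_induct)
  case (less n)
  show ?case
  proof (cases n)
    case 0 then show ?thesis by simp
  next
    case (Suc n')
    show ?thesis
    proof (cases n')
      case 0 then show ?thesis using Suc by simp
    next
      case (Suc k)
      have nk: "n = Suc (Suc k)" using Suc \<open>n = Suc n'\<close> by simp
      show ?thesis
      proof (cases "S = {}")
        case True then show ?thesis using nk by simp
      next
        case False
        define m where "m = Min S"
        have mm: "Min (Suc ` S) = Suc m" unfolding m_def
          using mono_Min_commute[of Suc S] False less.prems by (simp add: mono_def)
        have e1: "Suc ` S - {Suc m} = Suc ` (S - {m})" by auto
        have e2: "Suc ` S - {Suc m} - {Suc j} = Suc ` (S - {m} - {j})" for j by auto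
        have "Mf w n (Suc ` S) = (\<Sum>j\<in>Suc ` (S - {m}). w (Suc m) j * Mf w k (Suc ` S - {Suc m} - {j}))"
          by (simp add: nk mm e1)
        also have "\<dots> = (\<Sum>j\<in>S - {m}. w (Suc m) (Suc j) * Mf w k (Suc ` (S - {m} - {j})))"
          by (subst sum.reindex) (auto simp: e2)
        also have "\<dots> = (\<Sum>j\<in>S - {m}. w (Suc m) (Suc j) * Mf (\<lambda>i j. w (Suc i) (Suc j)) k (S - {m} - {j}))"
          using less.IH[of k] less.prems nk by (intro sum.cong refl) auto
        finally show ?thesis by (simp add: m_def nk)
      qed
    qed
  qed
qed

lemma Mf_scale:
  assumes "finite S" "card S = n"
  shows "Mf (\<lambda>i j. d i * d j * w i j) n S = (\<Prod>k\<in>S. d k) * Mf w n S"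
  using assms
proof (induction w n S rule: Mf.induct)
  case (3 w n S)
  have ne: "S \<noteq> {}" using 3 by auto
  define m where "m = Min S"
  have m: "m \<in> S" unfolding m_def using ne 3 by simp
  have "Mf (\<lambda>i j. d i * d j * w i j) (Suc (Suc n)) S
      = (\<Sum>j\<in>S - {m}. d m * d j * w m j * ((\<Prod>k\<in>S - {m} - {j}. d k) * Mf w n (S - {m} - {j})))"
    unfolding Mf.simps m_def[symmetric]
    by (intro sum.cong refl) (use 3 m in \<open>simp add: card_Diff_singleton m_def\<close>)
  also have "\<dots> = (\<Sum>j\<in>S - {m}. (\<Prod>k\<in>S. d k) * (w m j * Mf w n (S - {m} - {j})))"
  proof (intro sum.cong refl)
    fix j assume j: "j \<in> S - {m}"
    have "(\<Prod>k\<in>S. d k) = d m * (\<Prod>k\<in>S - {m}. d k)" using prod.remove[OF 3(2) m] .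
    also have "(\<Prod>k\<in>S - {m}. d k) = d j * (\<Prod>k\<in>S - {m} - {j}. d k)"
      using prod.remove[of "S - {m}" j d] 3(2) j by simp
    finally show "d m * d j * w m j * ((\<Prod>k\<in>S - {m} - {j}. d k) * Mf w n (S - {m} - {j}))
       = (\<Prod>k\<in>S. d k) * (w m j * Mf w n (S - {m} - {j}))" by (simp add: mult_ac)
  qed
  also have "\<dots> = (\<Prod>k\<in>S. d k) * Mf w (Suc (Suc n)) S"
    by (simp add: sum_distrib_left m_def)
  finally show ?case .
qed auto




definition Eset :: "nat set \<Rightarrow> nat \<Rightarrow> (nat \<times> nat) list set" where
  "Eset S T = {ps. length ps = T
     \<and> (\<Union>i<T. {fst (ps ! i), snd (ps ! i)}) = S
     \<and> (\<forall>i<T. fst (ps ! i) < snd (ps ! i))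
     \<and> sorted_wrt (<) (map fst ps)}"

lemma UN_Cons:
  "(\<Union>i<Suc n. {fst ((p#ps) ! i), snd ((p#ps) ! i)}) = {fst p, snd p} \<union> (\<Union>i<n. {fst (ps ! i), snd (ps ! i)})"
  by (auto simp: lessThan_Suc_eq_insert_0)

lemma card_UN_pairs: "card (\<Union>i<n. {fst (ps ! i), snd (ps ! i)}) \<le> 2 * n"
proof -
  have "card (\<Union>i<n. {fst (ps ! i), snd (ps ! i)}) \<le> (\<Sum>i<n. card {fst (ps ! i), snd (ps ! i)})"
    by (rule card_UN_le) simp
  also have "\<dots> \<le> (\<Sum>i<n. 2)" by (intro sum_mono) (simp add: card_insert_if)
  finally show ?thesis by simp
qed

lemma finite_Eset: "finite S \<Longrightarrow> finite (Eset S T)"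
proof -
  assume fin: "finite S"
  have "Eset S T \<subseteq> {ps. set ps \<subseteq> S \<times> S \<and> length ps = T}"
  proof
    fix ps assume ps: "ps \<in> Eset S T"
    have "set ps \<subseteq> S \<times> S"
    proof
      fix p assume "p \<in> set ps"
      then obtain i where i: "i < length ps" "ps ! i = p" by (auto simp: in_set_conv_nth)
      then show "p \<in> S \<times> S" using ps unfolding Eset_def by (cases p) fastforce
    qed
    then show "ps \<in> {ps. set ps \<subseteq> S \<times> S \<and> length ps = T}" using ps by (simp add: Eset_def)
  qed
  moreover have "finite {ps. set ps \<subseteq> S \<times> S \<and> length ps = T}"
    using finite_lists_length_eq[of "S \<times> S" T] fin by simp
  ultimately show ?thesis by (rule finite_subset)
qed


lemma E_step:
  assumes fin: "finite S" and card: "card S = 2 * Suc T" and m: "m = Min S"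
  shows "Eset S (Suc T) = (\<lambda>(j,ps). (m,j)#ps) ` (SIGMA j:S-{m}. Eset (S-{m}-{j}) T)"
proof -
  have ne: "S \<noteq> {}" using card by auto
  have mS: "m \<in> S" using m ne fin by simp
  have mle: "\<And>y. y \<in> S \<Longrightarrow> m \<le> y" using m fin by simp
  show ?thesis
  proof (rule equalityI[OF subsetI subsetI])
    fix ps assume ps: "ps \<in> Eset S (Suc T)"
    then obtain p ps' where pps: "ps = p # ps'" and len: "length ps' = T"
      unfolding Eset_def by (cases ps) auto
    obtain a b where p: "p = (a,b)" by (cases p)
    let ?U = "\<Union>i<T. {fst (ps' ! i), snd (ps' ! i)}"
    have SU: "S = {a, b} \<union> ?U" using ps unfolding Eset_def pps p
      by (simp only: UN_Cons mem_Collect_eq) simp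
    have lt: "\<forall>i<Suc T. fst (ps ! i) < snd (ps ! i)" using ps unfolding Eset_def by simp
    have ab: "a < b" using lt[rule_format, of 0] pps p by simp
    have lt': "\<forall>i<T. fst (ps' ! i) < snd (ps' ! i)" using lt pps by auto
    have srt: "sorted_wrt (<) (map fst ps)" using ps unfolding Eset_def by simp
    have srt': "sorted_wrt (<) (map fst ps')" using srt pps by simp
    have afst: "\<forall>i<T. a < fst (ps' ! i)" using srt pps p len by (auto simp: nth_mem)
    have aU: "\<forall>y\<in>?U. a < y" using afst lt' by fastforce
    have aS: "a \<le> y" if "y \<in> S" for y
    proof -
      have "y = a \<or> y = b \<or> y \<in> ?U" using SU that by blast
      then show "a \<le> y" using aU ab by (metis less_imp_le order_refl)
    qed
    have am: "a = m" unfolding m using fin SU aS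
      by (intro Min_eqI[symmetric]) auto
    have bS: "b \<in> S" "b \<noteq> m" using SU ab am by auto
    have finU: "finite ?U" by simp
    have bU: "b \<notin> ?U"
    proof
      assume "b \<in> ?U"
      then have "S = insert a ?U" using SU by auto
      then have "card S \<le> Suc (card ?U)" using finU by (simp add: card_insert_if)
      also have "\<dots> \<le> Suc (2 * T)" using card_UN_pairs[where n=T and ps=ps'] by simp
      finally show False using card by simp
    qed
    have Ueq: "?U = S - {m} - {b}" using SU aU bU am by auto
    have "ps' \<in> Eset (S - {m} - {b}) T" unfolding Eset_def using len Ueq lt' srt' by simp
    then show "ps \<in> (\<lambda>(j,ps). (m,j)#ps) ` (SIGMA j:S-{m}. Eset (S-{m}-{j}) T)"
      using bS pps p am by (intro image_eqI[of _ _ "(b, ps')"]) auto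
  next
    fix ps assume "ps \<in> (\<lambda>(j,ps). (m,j)#ps) ` (SIGMA j:S-{m}. Eset (S-{m}-{j}) T)"
    then obtain j ps' where j: "j \<in> S - {m}" and ps': "ps' \<in> Eset (S-{m}-{j}) T"
      and pps: "ps = (m,j) # ps'" by auto
    have len: "length ps' = T" and U: "(\<Union>i<T. {fst (ps' ! i), snd (ps' ! i)}) = S - {m} - {j}"
      and lt': "\<forall>i<T. fst (ps' ! i) < snd (ps' ! i)" and srt': "sorted_wrt (<) (map fst ps')"
      using ps' unfolding Eset_def by auto
    have mj: "m < j" using j mle[of j] by auto
    have "(\<Union>i<Suc T. {fst (ps ! i), snd (ps ! i)}) = S"
      unfolding pps UN_Cons U using mS j by auto
    moreover have "\<forall>i<Suc T. fst (ps ! i) < snd (ps ! i)"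
      using lt' mj pps by (auto simp: less_Suc_eq_0_disj)
    moreover have "\<forall>y\<in>set (map fst ps'). m < y"
    proof
      fix y assume "y \<in> set (map fst ps')"
      then obtain i where i: "i < T" "y = fst (ps' ! i)" using len by (auto simp: in_set_conv_nth)
      then have "y \<in> S - {m} - {j}" using U by blast
      then show "m < y" using mle by force
    qed
    ultimately show "ps \<in> Eset S (Suc T)" unfolding Eset_def using pps len srt' by simp
  qed
qed

lemma match_sum:
  assumes "finite S" "card S = 2 * T"
  shows "(\<Sum>ps\<in>Eset S T. \<Prod>i<T. w (fst (ps ! i)) (snd (ps ! i))) = Mf w (2 * T) S"
  using assms
proof (induction T arbitrary: S)
  case 0
  then have S: "S = {}" by simp
  have "Eset {} 0 = {[]}" unfolding Eset_def by auto
  then show ?case using S by simp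
next
  case (Suc T)
  define m where "m = Min S"
  have fin: "finite S" by (rule Suc.prems(1))
  have ne: "S \<noteq> {}" using Suc.prems by auto
  have mS: "m \<in> S" using m_def ne fin by simp
  have inj: "inj_on (\<lambda>(j,ps). (m,j)#ps) (SIGMA j:S-{m}. Eset (S-{m}-{j}) T)"
    by (auto simp: inj_on_def)
  have "(\<Sum>ps\<in>Eset S (Suc T). \<Prod>i<Suc T. w (fst (ps ! i)) (snd (ps ! i)))
      = (\<Sum>(j,ps)\<in>(SIGMA j:S-{m}. Eset (S-{m}-{j}) T). \<Prod>i<Suc T. w (fst (((m,j)#ps) ! i)) (snd (((m,j)#ps) ! i)))"
    unfolding E_step[OF fin Suc.prems(2) m_def] sum.reindex[OF inj]
    by (simp add: case_prod_unfold)
  also have "\<dots> = (\<Sum>j\<in>S-{m}. \<Sum>ps\<in>Eset (S-{m}-{j}) T. w m j * (\<Prod>i<T. w (fst (ps ! i)) (snd (ps ! i))))"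
    by (subst sum.Sigma[symmetric]) (auto simp del: prod.lessThan_Suc simp add: fin finite_Eset prod.lessThan_Suc_shift)
  also have "\<dots> = (\<Sum>j\<in>S-{m}. w m j * Mf w (2 * T) (S-{m}-{j}))"
  proof (intro sum.cong refl)
    fix j assume j: "j \<in> S - {m}"
    have c: "card (S-{m}-{j}) = 2 * T" using Suc.prems j mS by (simp add: card_Diff_singleton)
    show "(\<Sum>ps\<in>Eset (S-{m}-{j}) T. w m j * (\<Prod>i<T. w (fst (ps ! i)) (snd (ps ! i)))) = w m j * Mf w (2 * T) (S-{m}-{j})"
    proof -
      have "(\<Sum>ps\<in>Eset (S-{m}-{j}) T. \<Prod>i<T. w (fst (ps ! i)) (snd (ps ! i))) = Mf w (2 * T) (S-{m}-{j})"
        by (rule Suc.IH) (use fin c in auto)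
      then show ?thesis by (simp add: sum_distrib_left[symmetric])
    qed
  qed
  also have "\<dots> = Mf w (2 * Suc T) S" by (simp add: m_def)
  finally show ?case .
qed




lemma aux_real: "(A::real) \<noteq> 0 \<Longrightarrow> B \<noteq> 0 \<Longrightarrow> A + B \<noteq> 0 \<Longrightarrow> 1/A * (1/B) = 1/(A+B) * (1/B + 1/A)"
  by (simp add: field_simps)

lemma inv_diff_swap: "1 / ((a::real) - b) = - (1 / (b - a))"
  by (metis minus_diff_eq minus_divide_right)

lemma a_tri:
  assumes "inj_on x S" "k \<in> S" "s \<in> S" "m \<in> S" "k \<noteq> s" "m \<noteq> s" "k \<noteq> m"
  shows "a_entry x k s * a_entry x s m = a_entry x k m * (a_entry x s m - a_entry x s k)"
proof -
  have d1: "x k - x s \<noteq> 0" and d2: "x s - x m \<noteq> 0" and d3: "x k - x m \<noteq> 0"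
    using assms by (auto dest: inj_onD)
  have e: "x k - x m = (x k - x s) + (x s - x m)" by simp
  have "a_entry x k s * a_entry x s m = 1/(x k - x s) * (1/(x s - x m))"
    using assms unfolding a_entry_def by simp
  also have "\<dots> = 1/(x k - x m) * (1/(x s - x m) + 1/(x k - x s))"
    unfolding e by (rule aux_real[OF d1 d2]) (use d3 in simp)
  also have "\<dots> = a_entry x k m * (a_entry x s m - a_entry x s k)"
    using assms unfolding a_entry_def by (simp add: inv_diff_swap[of "x s" "x k"])
  finally show ?thesis .
qed

lemma a_skew: "a_entry x i j = - a_entry x j i"
  unfolding a_entry_def using inv_diff_swap[of "x i" "x j"] by simp

lemma det_B:
  "det (B_mat R x c) = (\<Prod>i\<in>{0..<R}. (c (Suc i))^2) * Fp (\<lambda>i j. a_entry x (Suc i) (Suc j)) {0..<R}"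
proof -
  let ?g = "\<lambda>i j. a_entry x (Suc i) (Suc j)"
  have "det (B_mat R x c) = (\<Sum>p\<in>{p. p permutes {0..<R}}. of_int (sign p) * (\<Prod>i=0..<R. b_entry x c (Suc i) (Suc (p i))))"
    unfolding det_def B_mat_def
    by (simp only: dim_row_mat dim_col_mat simp_thms if_True)
      (intro sum.cong refl arg_cong2[where f="(*)"] prod.cong, auto simp: index_mat dest: permutes_in_image)
  also have "\<dots> = (\<Sum>p\<in>{p. p permutes {0..<R}}. (\<Prod>i\<in>{0..<R}. (c (Suc i))^2) * (of_int (sign p) * (\<Prod>i\<in>{0..<R}. ?g i (p i))))"
  proof (intro sum.cong refl)
    fix p assume "p \<in> {p. p permutes {0..<R}}"
    then have p: "p permutes {0..<R}" by simp
    have pc: "(\<Prod>i\<in>{0..<R}. c (Suc (p i))) = (\<Prod>i\<in>{0..<R}. c (Suc i))"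
      using prod.permute[OF p, of "\<lambda>i. c (Suc i)"] by (simp add: comp_def)
    have "(\<Prod>i=0..<R. b_entry x c (Suc i) (Suc (p i)))
        = (\<Prod>i\<in>{0..<R}. c (Suc i)) * (\<Prod>i\<in>{0..<R}. c (Suc (p i))) * (\<Prod>i\<in>{0..<R}. ?g i (p i))"
      unfolding b_entry_def by (simp add: prod.distrib)
    also have "\<dots> = (\<Prod>i\<in>{0..<R}. (c (Suc i))^2) * (\<Prod>i\<in>{0..<R}. ?g i (p i))"
      by (simp add: pc power2_eq_square prod.distrib)
    finally show "of_int (sign p) * (\<Prod>i=0..<R. b_entry x c (Suc i) (Suc (p i)))
       = (\<Prod>i\<in>{0..<R}. (c (Suc i))^2) * (of_int (sign p) * (\<Prod>i\<in>{0..<R}. ?g i (p i)))"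
      by (simp add: mult_ac)
  qed
  also have "\<dots> = (\<Prod>i\<in>{0..<R}. (c (Suc i))^2) * Fp ?g {0..<R}"
    unfolding Fp_def by (simp add: sum_distrib_left)
  finally show ?thesis .
qed




theorem theorem2:
  fixes R :: nat and x c :: "nat \<Rightarrow> real"
  assumes "R \<ge> 1"
    and "inj_on x {1..R}"
  shows "(odd R \<longrightarrow> det (B_mat R x c) = 0)
    \<and> (\<forall>T. R = 2 * T \<longrightarrow>
         det (B_mat R x c) = (\<Prod>k=1..R. (c k)\<^sup>2) *
            (\<Sum>ps\<in>matchings_E R T. \<Prod>i<T. (a_entry x (fst (ps ! i)) (snd (ps ! i)))\<^sup>2)
       \<and> (\<Prod>k=1..R. (c k)\<^sup>2) *
            (\<Sum>ps\<in>matchings_E R T. \<Prod>i<T. (a_entry x (fst (ps ! i)) (snd (ps ! i)))\<^sup>2)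
         = (\<Sum>ps\<in>matchings_E R T. \<Prod>i<T. (b_entry x c (fst (ps ! i)) (snd (ps ! i)))\<^sup>2))"
proof -
  let ?g = "\<lambda>i j. a_entry x (Suc i) (Suc j)"
  let ?wa = "\<lambda>i j. (a_entry x i j)^2"
  let ?wb = "\<lambda>i j. (b_entry x c i j)^2"
  let ?C = "\<Prod>k=1..R. (c k)\<^sup>2"
  have img: "Suc ` {0..<R} = {1..R}" by (auto simp: image_iff)
  have injS: "inj_on x (Suc ` {0..<R})" using assms(2) img by simp
  have C: "(\<Prod>i\<in>{0..<R}. (c (Suc i))^2) = ?C"
  proof -
    have "prod (\<lambda>k. (c k)^2) (Suc ` {0..<R}) = prod ((\<lambda>k. (c k)^2) \<circ> Suc) {0..<R}"
      by (rule prod.reindex) simp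
    from this[unfolded img comp_def] show ?thesis by (rule sym)
  qed
  have F: "Fp ?g {0..<R} = Mf (\<lambda>i j. (?g i j)^2) R {0..<R}"
  proof (rule Fp_Mf)
    show "finite {0..<R}" by simp
    show "card {0..<R} = R" by simp
    show "\<And>i. i \<in> {0..<R} \<Longrightarrow> ?g i i = 0" by (simp add: a_entry_def)
    show "\<And>i j. i \<in> {0..<R} \<Longrightarrow> j \<in> {0..<R} \<Longrightarrow> ?g i j = - ?g j i" by (rule a_skew)
    show "\<And>k s m. k \<in> {0..<R} \<Longrightarrow> m \<in> {0..<R} \<Longrightarrow> s \<in> {0..<R} \<Longrightarrow> k \<noteq> s \<Longrightarrow> m \<noteq> s \<Longrightarrow> k \<noteq> m \<Longrightarrow>
               ?g k s * ?g s m = ?g k m * (?g s m - ?g s k)"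
      by (rule a_tri[OF injS]) auto
  qed
  have sh: "Mf (\<lambda>i j. (?g i j)^2) R {0..<R} = Mf ?wa R {1..R}"
    using Mf_shift[of "{0..<R}" ?wa R] img by simp
  have det: "det (B_mat R x c) = ?C * Mf ?wa R {1..R}"
    using det_B[of R x c] C F sh by simp
  have ME: "matchings_E n T = Eset {1..n} T" for n T
    unfolding matchings_E_def Eset_def by simp
  have scale: "?C * Mf ?wa R {1..R} = Mf ?wb R {1..R}"
  proof -
    have "Mf (\<lambda>i j. (c i)^2 * (c j)^2 * ?wa i j) R {1..R} = (\<Prod>k\<in>{1..R}. (c k)^2) * Mf ?wa R {1..R}"
      by (rule Mf_scale) simp_all
    moreover have "(\<lambda>i j. (c i)^2 * (c j)^2 * ?wa i j) = ?wb"
      by (intro ext) (simp add: b_entry_def power_mult_distrib)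
    ultimately show ?thesis by simp
  qed
  show ?thesis
  proof (intro conjI impI allI)
    assume "odd R"
    then show "det (B_mat R x c) = 0" using det Mf_odd by simp
  next
    fix T assume RT: "R = 2 * T"
    have ma: "(\<Sum>ps\<in>matchings_E R T. \<Prod>i<T. (a_entry x (fst (ps ! i)) (snd (ps ! i)))\<^sup>2) = Mf ?wa R {1..R}"
      unfolding ME RT by (rule match_sum) simp_all
    have mb: "(\<Sum>ps\<in>matchings_E R T. \<Prod>i<T. (b_entry x c (fst (ps ! i)) (snd (ps ! i)))\<^sup>2) = Mf ?wb R {1..R}"
      unfolding ME RT by (rule match_sum) simp_all
    show "det (B_mat R x c) = ?C * (\<Sum>ps\<in>matchings_E R T. \<Prod>i<T. (a_entry x (fst (ps ! i)) (snd (ps ! i)))\<^sup>2)"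
      using det ma by simp
    show "?C * (\<Sum>ps\<in>matchings_E R T. \<Prod>i<T. (a_entry x (fst (ps ! i)) (snd (ps ! i)))\<^sup>2)
         = (\<Sum>ps\<in>matchings_E R T. \<Prod>i<T. (b_entry x c (fst (ps ! i)) (snd (ps ! i)))\<^sup>2)"
      using ma mb scale by simp
  qed
qed


end
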